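(* Let $e=e_{\gamma,a}$ be the directed edge of $\Gamma$ with initial vertex (the element represented by) $\gamma$ and label $a\in\{x^{\pm1},y^{\pm1}\}$, where $\gamma\equiv x^{i_n}y^{\epsilon_n}\cdots x^{i_1}y^{\epsilon_1}x^{i_0}\in\mathcal N$ (with $n\ge0$, $\epsilon_j\in\{\pm1\}$, $i_j\in\mathbb Z$). Then $e$ does not lie on the tree $T$ if and only if one of the following holds: (1) $a\equiv y$, $n\ge1$ and $i_0\ge1$; (2) $a\equiv y^{-1}$, $n\ge1$ and $i_0\ge2$. In particular, all edges of $\Gamma$ labeled $x^{\pm1}$ lie on $T$.
   Context: $F$ is Thompson's group with generators $x,y$, $A=\{x^{\pm1},y^{\pm1}\}$, and $\Gamma$ is the Cayley graph of $F$ with respect to $A$. $\mathcal N$ is the set of words over $A$ containing no subword $aa^{-1}$ ($a\in A$), $y^\epsilon x^iy$, or $y^\epsilon x^{i+1}y^{-1}$ ($\epsilon=\pm1$, $i\ge1$); it is a set of unique normal forms for $F$ (the irreducible words of Guba–Sapir's convergent rewriting system). $T$ is the subtree of $\Gamma$ such that the labels of non-backtracking paths in $T$ starting at the identity vertex are exactly the words in $\mathcal N$. *)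

theory Defs
  imports Main
begin

text \<open>Generators of Thompson's group F and letters of the alphabet A = {x, x^-1, y, y^-1}.
 A letter (g, True) is g, a letter (g, False) is g^-1.\<close>
datatype gen = GX | GY

type_synonym letter = "gen \<times> bool"
type_synonym word = "letter list"

abbreviation lx :: letter where "lx \<equiv> (GX, True)"
abbreviation lX :: letter where "lX \<equiv> (GX, False)"
abbreviation ly :: letter where "ly \<equiv> (GY, True)"
abbreviation lY :: letter where "lY \<equiv> (GY, False)"

definition linv :: "letter \<Rightarrow> letter" where
  "linv l = (fst l, \<not> snd l)"

text \<open>Standard presentation F = < x, y | [x y^-1, x^-1 y x], [x y^-1, x^-2 y x^2] >,
  commutator [a,b] = a^-1 b^-1 a b.\<close>
definition rel1 :: word where
  "rel1 = [ly, lX] @ [lX, lY, lx] @ [lx, lY] @ [lX, ly, lx]"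
definition rel2 :: word where
  "rel2 = [ly, lX] @ [lX, lX, lY, lx, lx] @ [lx, lY] @ [lX, lX, ly, lx, lx]"

inductive eqF :: "word \<Rightarrow> word \<Rightarrow> bool" where
  eqF_refl: "eqF u u"
| eqF_sym: "eqF u v \<Longrightarrow> eqF v u"
| eqF_trans: "eqF u v \<Longrightarrow> eqF v w \<Longrightarrow> eqF u w"
| eqF_cong: "eqF u v \<Longrightarrow> eqF (p @ u @ s) (p @ v @ s)"
| eqF_cancel: "eqF [l, linv l] []"
| eqF_rel1: "eqF rel1 []"
| eqF_rel2: "eqF rel2 []"

definition subword :: "word \<Rightarrow> word \<Rightarrow> bool" where
  "subword u w \<longleftrightarrow> (\<exists>p s. w = p @ u @ s)"

definition NF :: "word set" where
  "NF = {w. (\<forall>l. \<not> subword [l, linv l] w)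
          \<and> (\<forall>e::bool. \<forall>i::nat. i \<ge> 1 \<longrightarrow>
                \<not> subword ([(GY, e)] @ replicate i lx @ [ly]) w
              \<and> \<not> subword ([(GY, e)] @ replicate (i + 1) lx @ [lY]) w)}"

definition xpow :: "int \<Rightarrow> word" where
  "xpow i = (if i \<ge> 0 then replicate (nat i) lx else replicate (nat (- i)) lX)"

fun nfword :: "nat \<Rightarrow> (nat \<Rightarrow> bool) \<Rightarrow> (nat \<Rightarrow> int) \<Rightarrow> word" where
  "nfword 0 eps i = xpow (i 0)"
| "nfword (Suc n) eps i = xpow (i (Suc n)) @ [(GY, eps (Suc n))] @ nfword n eps i"

text \<open>T consists of the edges from vertex w to vertex w b (label b)
  for all w b in N; the directed edge from g labelled a is the same geometric edge as the one
  from g a labelled a^-1.\<close>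
definition onT :: "word \<Rightarrow> letter \<Rightarrow> bool" where
  "onT \<gamma> a \<longleftrightarrow> (\<exists>w b. w @ [b] \<in> NF \<and>
      ((eqF w \<gamma> \<and> b = a) \<or> (eqF w (\<gamma> @ [a]) \<and> b = linv a)))"

end

theory Submission
  imports Defs
begin


definition winv :: "word \<Rightarrow> word" where "winv w = rev (map linv w)"

lemma linv_linv[simp]: "linv (linv l) = l" by (simp add: linv_def)

lemma eqF_app: "eqF u u' \<Longrightarrow> eqF v v' \<Longrightarrow> eqF (u@v) (u'@v')"
proof -
  assume a: "eqF u u'" "eqF v v'"
  have "eqF (u@v) (u'@v)" using eqF_cong[OF a(1), of "[]" v] by simp
  moreover have "eqF (u'@v) (u'@v')" using eqF_cong[OF a(2), of u' "[]"] by simp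
  ultimately show ?thesis by (rule eqF_trans)
qed

lemma eqF_winv_left: "eqF (winv u @ u) []"
proof (induction u)
  case Nil then show ?case by (simp add: winv_def eqF_refl)
next
  case (Cons a u)
  have c: "eqF [linv a, a] []" using eqF_cancel[of "linv a"] by simp
  have "eqF (winv u @ [linv a, a] @ u) (winv u @ [] @ u)" by (rule eqF_cong[OF c])
  then have "eqF (winv (a#u) @ a # u) (winv u @ u)" by (simp add: winv_def)
  then show ?case using Cons eqF_trans by blast
qed

lemma eqF_winv: "eqF u v \<Longrightarrow> eqF (winv u) (winv v)"
proof (induction rule: eqF.induct)
  case (eqF_refl u) show ?case by (rule eqF.eqF_refl)
next
  case (eqF_sym u v) show ?case by (rule eqF.eqF_sym[OF eqF_sym.IH])
next
  case (eqF_trans u v w) then show ?case by (metis eqF.eqF_trans)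
next
  case (eqF_cong u v p s) then show ?case using eqF.eqF_cong[OF eqF_cong.IH, of "winv s" "winv p"]
    by (simp add: winv_def)
next
  case (eqF_cancel l) then show ?case using eqF.eqF_cancel[of l] by (simp add: winv_def)
next
  case eqF_rel1
  have "eqF (winv rel1 @ rel1 @ []) (winv rel1 @ [] @ [])" by (rule eqF.eqF_cong[OF eqF.eqF_rel1])
  then have "eqF (winv rel1) (winv rel1 @ rel1)" by (simp add: eqF.eqF_sym)
  then show ?case using eqF_winv_left eqF.eqF_trans by (simp add: winv_def)
next
  case eqF_rel2
  have "eqF (winv rel2 @ rel2 @ []) (winv rel2 @ [] @ [])" by (rule eqF.eqF_cong[OF eqF.eqF_rel2])
  then have "eqF (winv rel2) (winv rel2 @ rel2)" by (simp add: eqF.eqF_sym)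
  then show ?case using eqF_winv_left eqF.eqF_trans by (simp add: winv_def)
qed

quotient_type fg = word / eqF
  morphisms rep_fg abs_fg
  by (rule equivpI; auto simp: reflp_def symp_def transp_def intro: eqF.intros)

instantiation fg :: group_add
begin
lift_definition zero_fg :: fg is "[]" .
lift_definition plus_fg :: "fg \<Rightarrow> fg \<Rightarrow> fg" is "(@)" by (rule eqF_app)
lift_definition uminus_fg :: "fg \<Rightarrow> fg" is winv by (rule eqF_winv)
definition minus_fg_def: "a - b = a + - (b::fg)"
instance
proof
  fix a b c :: fg
  show "a + b + c = a + (b + c)" by transfer (simp add: eqF_refl)
  show "0 + a = a" by transfer (simp add: eqF_refl)
  show "a + 0 = a" by transfer (simp add: eqF_refl)
  show "- a + a = 0" by transfer (rule eqF_winv_left)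
  show "a + - b = a - b" by (simp add: minus_fg_def)
qed
end

lemma abs_app: "abs_fg (u @ v) = abs_fg u + abs_fg v"
  by (simp add: plus_fg.abs_eq)
lemma abs_nil: "abs_fg [] = 0" by (simp add: zero_fg_def)
lemma abs_eq_iff: "abs_fg u = abs_fg v \<longleftrightarrow> eqF u v"
  by (simp add: fg.abs_eq_iff)
lemma abs_cons: "abs_fg (a # u) = abs_fg [a] + abs_fg u"
  using abs_app[of "[a]" u] by simp



fun ins :: "int \<Rightarrow> bool \<Rightarrow> (int \<times> bool) list \<Rightarrow> (int \<times> bool) list" where
  "ins t e [] = [(t,e)]"
| "ins t e ((s,f)#L) = (if e then (if s > t then (s+1,f) # ins t e L else if s = t \<and> \<not>f then L else (t,e)#(s,f)#L)
                      else (if s \<ge> t+2 then (s-1,f) # ins t e L else if s = t \<and> f then L else (t,e)#(s,f)#L))"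

fun vp :: "int \<times> bool \<Rightarrow> int \<times> bool \<Rightarrow> bool" where
  "vp (s1,e1) (s2,e2) = (if e1 then s2 \<le> s1 \<and> (s2 = s1 \<longrightarrow> e2) else s2 \<le> s1 + 1 \<and> (s2 = s1 \<longrightarrow> \<not> e2))"

fun valid :: "(int \<times> bool) list \<Rightarrow> bool" where
  "valid [] = True" | "valid [a] = True" | "valid (a#b#L) = (vp a b \<and> valid (b#L))"

lemma valid_tl: "valid (a#L) \<Longrightarrow> valid L"
  by (cases L) auto

lemma ins_valid_T_pass: "valid ((s,f)#L) \<Longrightarrow> s > t \<Longrightarrow> valid ((s+1, f) # ins t True L)"
proof (induction L arbitrary: s f)
  case Nil then show ?case by auto
next
  case (Cons b L)
  obtain u g where b: "b = (u,g)" by (cases b)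
  show ?case
  proof (cases "u > t")
    case True
    then have "valid ((u+1,g) # ins t True L)" using Cons b by auto
    then show ?thesis using Cons b True by auto
  next
    case False
    show ?thesis
    proof (cases "u = t \<and> \<not> g")
      case True
      then show ?thesis using Cons b by (cases L) (auto split: if_splits)
    next
      case F2: False
      then show ?thesis using Cons b False by auto
    qed
  qed
qed

lemma ins_valid_F_pass: "valid ((s,f)#L) \<Longrightarrow> s \<ge> t+2 \<Longrightarrow> valid ((s-1, f) # ins t False L)"
proof (induction L arbitrary: s f)
  case Nil then show ?case by auto
next
  case (Cons b L)
  obtain u g where b: "b = (u,g)" by (cases b)
  show ?case
  proof (cases "u \<ge> t+2")
    case True
    then have "valid ((u-1,g) # ins t False L)" using Cons b by auto
    then show ?thesis using Cons b True by auto
  next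
    case False
    show ?thesis
    proof (cases "u = t \<and> g")
      case True
      then show ?thesis using Cons b by (cases L) (auto split: if_splits)
    next
      case F2: False
      then show ?thesis using Cons b False by auto
    qed
  qed
qed

lemma ins_valid: "valid L \<Longrightarrow> valid (ins t e L)"
proof (cases L)
  case Nil then show ?thesis by simp
next
  case (Cons b L')
  assume v: "valid L"
  obtain u g where b: "b = (u,g)" by (cases b)
  show ?thesis
  proof (cases e)
    case True
    then show ?thesis using v Cons b ins_valid_T_pass[of u g L' t] valid_tl[of b L']
      by (auto simp del: valid.simps(3)) (auto simp: valid.simps)
  next
    case False
    then show ?thesis using v Cons b ins_valid_F_pass[of u g L' t] valid_tl[of b L']
      by (auto simp del: valid.simps(3)) (auto simp: valid.simps)
  qed
qed

definition sh :: "int \<Rightarrow> int \<times> bool \<Rightarrow> int \<times> bool" where "sh k a = (fst a + k, snd a)"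

lemma valid_sh: "valid (map (sh k) L) = valid L"
  by (induction L rule: valid.induct) (auto simp: sh_def)

lemma ins_sh: "map (sh k) (ins t e L) = ins (t+k) e (map (sh k) L)"
  by (induction L) (auto simp: sh_def)

lemma ins_noop: "valid (h # L) \<Longrightarrow> ins (fst h) (snd h) L = h # L"
  by (cases h; cases L) (auto split: if_splits)

lemma ins_cancel: "valid L \<Longrightarrow> ins t (\<not>e) (ins t e L) = L"
proof (induction L)
  case Nil then show ?case by auto
next
  case (Cons b L)
  obtain u g where b: "b = (u,g)" by (cases b)
  have vL: "valid L" using Cons valid_tl by blast
  show ?case
  proof (cases e)
    case True
    show ?thesis
    proof (cases "u > t")
      case True
      then show ?thesis using Cons vL b \<open>e\<close> by auto
    next
      case False
      then show ?thesis using Cons.prems b \<open>e\<close> ins_noop[of "(t,False)" L] by auto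
    qed
  next
    case False
    show ?thesis
    proof (cases "u \<ge> t+2")
      case True
      then show ?thesis using Cons vL b \<open>\<not>e\<close> by auto
    next
      case False
      then show ?thesis using Cons.prems b \<open>\<not>e\<close> ins_noop[of "(t,True)" L] by auto
    qed
  qed
qed

lemma ins_F_head: "valid ((t,False)#L) \<Longrightarrow> s \<ge> t+2 \<Longrightarrow> ins s False L = (s,False)#L"
  by (cases L) auto

lemma ins_comm: "valid L \<Longrightarrow> s \<ge> t+2 \<Longrightarrow> ins s False (ins t True L) = ins t True (ins (s-1) False L)"
proof (induction L)
  case Nil then show ?case by auto
next
  case (Cons b L)
  obtain u g where b: "b = (u,g)" by (cases b)
  have vL: "valid L" using Cons valid_tl by blast
  show ?case
  proof (cases "u > t")
    case True
    then show ?thesis using Cons vL b by auto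
  next
    case False
    then show ?thesis using Cons.prems b ins_F_head[of t L s] by auto
  qed
qed



definition X :: fg where "X = abs_fg [lx]"
definition yl :: "bool \<Rightarrow> fg" where "yl e = abs_fg [(GY,e)]"
definition xp :: "int \<Rightarrow> fg" where "xp k = abs_fg (xpow k)"
definition cc :: "int \<Rightarrow> bool \<Rightarrow> fg" where "cc s e = - xp s + yl e + xp s"

lemma abs_lX: "abs_fg [lX] = - X"
  by (simp add: X_def uminus_fg.abs_eq winv_def linv_def)
lemma yl_F: "yl False = - yl True"
  by (simp add: yl_def uminus_fg.abs_eq winv_def linv_def)

lemma xp_succ: "xp (k+1) = xp k + X"
proof (cases "k \<ge> 0")
  case True
  then have "xpow (k+1) = xpow k @ [lx]"
    by (simp add: xpow_def nat_add_distrib replicate_append_same)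
  then show ?thesis by (simp add: xp_def X_def abs_app)
next
  case False
  then obtain m where m: "nat (-k) = Suc m" by (metis gr0_implies_Suc nat_0_less_mult_iff zero_less_nat_eq linorder_not_le neg_0_less_iff_less mult_1)
  have "xpow k = xpow (k+1) @ [lX]"
  proof -
    have "nat (-(k+1)) = m" using m by simp
    moreover have "0 \<le> k + 1 \<Longrightarrow> m = 0" using m False by simp
    ultimately show ?thesis using m False by (simp add: xpow_def replicate_append_same[symmetric])
  qed
  then have "xp k = xp (k+1) + - X" by (simp add: xp_def abs_app abs_lX)
  then show ?thesis by (simp add: add.assoc)
qed

lemma xp0: "xp 0 = 0" by (simp add: xp_def xpow_def abs_nil)

lemma xp_add: "xp (a + b) = xp a + xp b"
proof (induction b rule: int_induct[where k=0])
  case base then show ?case by (simp add: xp0)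
next
  case (step1 i) then show ?case using xp_succ[of "a+i"] xp_succ[of i] by (simp add: add.assoc)
next
  case (step2 i)
  have "xp (a + i) = xp (a + (i - 1)) + X" using xp_succ[of "a+(i-1)"] by simp
  moreover have "xp i = xp (i - 1) + X" using xp_succ[of "i-1"] by simp
  ultimately have "xp (a + (i - 1)) + X = xp a + xp (i - 1) + X" using step2 by (simp add: add.assoc)
  then show ?case by simp
qed

lemma xp_neg: "xp (- a) = - xp a"
  using xp_add[of a "-a"] by (simp add: xp0 eq_neg_iff_add_eq_0 minus_unique)

declare add_uminus_conv_diff[simp del]
lemmas gs = add.assoc minus_add diff_conv_add_uminus

lemma cc_F: "cc s False = - cc s True"
  by (simp add: cc_def yl_F gs)

lemma cc_shift: "- xp k + cc s e + xp k = cc (s+k) e"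
  by (simp add: cc_def xp_add gs)

lemma cc_cancel: "cc t e + cc t (\<not> e) = 0"
  by (cases e) (simp_all add: cc_F)

abbreviation yy where "yy s \<equiv> cc s True"

lemma grp1: "(a::'a::group_add) + - b + - a + c = 0 \<Longrightarrow> c + a = a + b"
proof -
  assume h: "a + - b + - a + c = 0"
  have "c = - (a + - b + - a)" using minus_unique[OF h] by simp
  also have "\<dots> = a + b + - a" by (simp add: gs)
  finally show ?thesis by (simp add: gs)
qed

lemma abs_cons2: "u \<noteq> [] \<Longrightarrow> abs_fg (a # u) = abs_fg [a] + abs_fg u"
  by (rule abs_cons)

lemma abs_lx: "abs_fg [lx] = X" by (simp add: X_def)
lemma abs_ly: "abs_fg [ly] = yl True" by (simp add: yl_def)
lemma abs_lY: "abs_fg [lY] = - yl True" using yl_F by (simp add: yl_def)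

lemma rel1_grp: "abs_fg rel1 = yy 0 + - yy 2 + - yy 0 + yy 1"
proof -
  have "xp 1 = X" using xp_succ[of 0] by (simp add: xp0)
  moreover have "xp 2 = X + X" using xp_succ[of 1] calculation by simp
  ultimately show ?thesis
    by (simp add: rel1_def abs_cons2 abs_lX abs_lx abs_ly abs_lY cc_def xp0 gs)
qed

lemma rel2_grp: "abs_fg rel2 = yy 0 + - yy 3 + - yy 0 + yy 2"
proof -
  have "xp 1 = X" using xp_succ[of 0] by (simp add: xp0)
  moreover have "xp 2 = X + X" using xp_succ[of 1] calculation by simp
  moreover have "xp 3 = X + X + X" using xp_succ[of 2] calculation by simp
  ultimately show ?thesis
    by (simp add: rel2_def abs_cons2 abs_lX abs_lx abs_ly abs_lY cc_def xp0 gs)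
qed

lemma conj_shift: "- xp k + (a + b) + xp k = (- xp k + a + xp k) + (- xp k + b + xp k)"
  by (simp add: gs)

lemma R_shift: "yy d + yy 0 = yy 0 + yy (d+1) \<Longrightarrow> yy (t+d) + yy t = yy t + yy (t+d+1)"
proof -
  assume h: "yy d + yy 0 = yy 0 + yy (d+1)"
  have "- xp t + (yy d + yy 0) + xp t = - xp t + (yy 0 + yy (d+1)) + xp t" using h by simp
  then have "yy (d+t) + yy (0+t) = yy (0+t) + yy (d+1+t)" by (simp only: conj_shift cc_shift)
  moreover have "d + t = t + d" "0 + t = t" "d+1+t = t+d+1" by simp_all
  ultimately show ?thesis by metis
qed

lemma R_base1: "yy (t+1) + yy t = yy t + yy (t+2)"
proof -
  have "abs_fg rel1 = 0" using eqF_rel1 abs_eq_iff abs_nil by metis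
  then have "yy 1 + yy 0 = yy 0 + yy 2" using rel1_grp grp1 by metis
  then have "yy 1 + yy 0 = yy 0 + yy (1+1)" by simp
  from R_shift[OF this, of t] show ?thesis by (simp add: add.assoc)
qed

lemma R_base2: "yy (t+2) + yy t = yy t + yy (t+3)"
proof -
  have "abs_fg rel2 = 0" using eqF_rel2 abs_eq_iff abs_nil by metis
  then have "yy 2 + yy 0 = yy 0 + yy 3" using rel2_grp grp1 by metis
  then have "yy 2 + yy 0 = yy 0 + yy (2+1)" by simp
  from R_shift[OF this, of t] show ?thesis by (simp add: add.assoc)
qed

lemma R_conj: "(a::fg) + b = b + c \<longleftrightarrow> - b + a + b = c"
  by (metis add.assoc add_minus_cancel minus_add_cancel)

lemma R_all: "d \<ge> 1 \<Longrightarrow> yy (t+d) + yy t = yy t + yy (t+d+1)"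
proof (induction "nat d" arbitrary: d t rule: less_induct)
  case less
  show ?case
  proof (cases "d \<le> 2")
    case True
    then have "d = 1 \<or> d = 2" using less.prems by auto
    then show ?thesis using R_base1[of t] R_base2[of t] by (auto simp: add.assoc)
  next
    case False
    have IH: "\<And>d' t'. 1 \<le> d' \<Longrightarrow> d' < d \<Longrightarrow> - yy t' + yy (t'+d') + yy t' = yy (t'+d'+1)"
    proof -
      fix d' t' :: int assume "1 \<le> d'" "d' < d"
      then have "yy (t'+d') + yy t' = yy t' + yy (t'+d'+1)" using less.hyps[of d' t'] less.prems by simp
      then show "- yy t' + yy (t'+d') + yy t' = yy (t'+d'+1)" using R_conj by blast
    qed
    have i1: "t+1+(d-2) = t+d-1" "t+1+(d-2)+1 = t+d" "t+(d-1) = t+d-1" "t+(d-1)+1 = t+d"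
       "t+2+(d-2) = t+d" "t+2+(d-2)+1 = t+d+1" by simp_all
    have e1: "yy (t+d) = - yy (t+1) + yy (t+d-1) + yy (t+1)"
      using IH[of "d-2" "t+1"] False unfolding i1 by simp
    have e2: "yy (t+1) + yy t = yy t + yy (t+2)" by (rule R_base1)
    have e3: "- yy t + yy (t+d-1) + yy t = yy (t+d)"
      using IH[of "d-1" t] False unfolding i1 by simp
    have e4: "- yy (t+2) + yy (t+d) + yy (t+2) = yy (t+d+1)"
      using IH[of "d-2" "t+2"] False unfolding i1 by simp
    have "- yy t + yy (t+d) + yy t = - (yy (t+1) + yy t) + yy (t+d-1) + (yy (t+1) + yy t)"
      using e1 by (simp add: gs)
    also have "\<dots> = - yy (t+2) + (- yy t + yy (t+d-1) + yy t) + yy (t+2)"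
      unfolding e2 by (simp add: gs)
    also have "\<dots> = yy (t+d+1)" using e3 e4 by simp
    finally show ?thesis using R_conj by blast
  qed
qed

lemma G1: "s > t \<Longrightarrow> cc s e + cc t True = cc t True + cc (s+1) e"
proof -
  assume st: "s > t"
  have h: "yy s + yy t = yy t + yy (s+1)" using R_all[of "s-t" t] st by simp
  show ?thesis
  proof (cases e)
    case True then show ?thesis using h by simp
  next
    case False
    have "- yy t + yy s + yy t = yy (s+1)" using h R_conj by blast
    then have "- (- yy t + yy s + yy t) = - yy (s+1)" by simp
    then have "- yy t + - yy s + yy t = - yy (s+1)" by (simp add: gs)
    then have "- yy s + yy t = yy t + - yy (s+1)" using R_conj by blast
    then show ?thesis using False by (simp add: cc_F)
  qed
qed

lemma G2: "s \<ge> t+2 \<Longrightarrow> cc s e + cc t False = cc t False + cc (s-1) e"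
proof -
  assume st: "s \<ge> t+2"
  have "cc (s-1) e + yy t = yy t + cc s e" using G1[of t "s-1" e] st by simp
  then have "- yy t + cc (s-1) e + yy t = cc s e" using R_conj by blast
  then have "cc s e + - yy t = (- yy t + cc (s-1) e + yy t) + - yy t" by simp
  also have "\<dots> = - yy t + cc (s-1) e" by (simp add: gs)
  finally have "cc s e + - yy t = - yy t + cc (s-1) e" .
  then show ?thesis by (simp add: cc_F)
qed



fun P :: "(int \<times> bool) list \<Rightarrow> fg" where
  "P [] = 0" | "P (h # L) = P L + cc (fst h) (snd h)"

lemma P_ins: "P (ins t e L) = P L + cc t e"
proof (induction L)
  case Nil then show ?case by simp
next
  case (Cons b L)
  obtain u g where b: "b = (u,g)" by (cases b)
  show ?case
  proof (cases e)
    case True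
    show ?thesis
    proof (cases "u > t")
      case True
      then show ?thesis using Cons b \<open>e\<close> G1[of t u g] by (simp add: add.assoc)
    next
      case False
      then show ?thesis using b \<open>e\<close> cc_cancel[of t False] by (simp add: add.assoc)
    qed
  next
    case False
    show ?thesis
    proof (cases "u \<ge> t+2")
      case True
      then show ?thesis using Cons b \<open>\<not>e\<close> G2[of t u g] by (simp add: add.assoc)
    next
      case False
      then show ?thesis using b \<open>\<not>e\<close> cc_cancel[of t True] by (simp add: add.assoc)
    qed
  qed
qed

lemma P_sh: "P (map (sh k) L) = - xp k + P L + xp k"
proof (induction L)
  case Nil then show ?case by simp
next
  case (Cons h L)
  have "cc (fst h + k) (snd h) = - xp k + cc (fst h) (snd h) + xp k" using cc_shift by simp
  then show ?case using Cons by (simp add: sh_def gs)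
qed

fun dwr :: "int \<Rightarrow> (int \<times> bool) list \<Rightarrow> int \<Rightarrow> word" where
  "dwr p [] T = xpow (T - p)"
| "dwr p ((s,e)#L) T = dwr s L T @ [(GY,e)] @ xpow (s - p)"

lemma abs_dwr: "abs_fg (dwr p L T) = xp T + P L + - xp p"
proof (induction L arbitrary: p)
  case Nil
  show ?case using xp_add[of T "-p"] by (simp add: xp_def[symmetric] xp_neg diff_conv_add_uminus)
next
  case (Cons h L)
  obtain s e where h: "h = (s,e)" by (cases h)
  have "abs_fg (dwr p (h#L) T) = (xp T + P L + - xp s) + yl e + (xp s + - xp p)"
    using Cons xp_add[of s "-p"] abs_cons[of "(GY,e)" "xpow (s-p)"]
    by (simp add: h abs_app xp_def[symmetric] yl_def[symmetric] xp_neg diff_conv_add_uminus add.assoc)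
  then show ?case by (simp add: h cc_def gs)
qed

fun act :: "int \<times> (int \<times> bool) list \<Rightarrow> letter \<Rightarrow> int \<times> (int \<times> bool) list" where
  "act (T,L) (g,b) = (case g of GX \<Rightarrow> (if b then (T+1, map (sh 1) L) else (T - 1, map (sh (-1)) L))
                        | GY \<Rightarrow> (T, ins 0 b L))"

definition dec :: "int \<times> (int \<times> bool) list \<Rightarrow> word" where "dec st = dwr 0 (snd st) (fst st)"

definition run :: "int \<times> (int \<times> bool) list \<Rightarrow> word \<Rightarrow> int \<times> (int \<times> bool) list" where
  "run st w = foldl act st w"

lemma valid_act: "valid (snd st) \<Longrightarrow> valid (snd (act st a))"
  by (cases st; cases a; cases "fst a") (auto simp: valid_sh ins_valid)

lemma valid_run: "valid (snd st) \<Longrightarrow> valid (snd (run st w))"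
  unfolding run_def by (induction w arbitrary: st) (auto simp: valid_act)

lemma abs_dec_act: "abs_fg (dec (act st a)) = abs_fg (dec st) + abs_fg [a]"
proof -
  obtain T L where st: "st = (T,L)" by (cases st)
  obtain g b where a: "a = (g,b)" by (cases a)
  show ?thesis
  proof (cases g)
    case GX
    show ?thesis
    proof (cases b)
      case True
      have "xp 1 = X" using xp_succ[of 0] by (simp add: xp0)
      then show ?thesis using GX True by (simp add: st a dec_def abs_dwr P_sh xp_succ xp0 abs_lx gs)
    next
      case False
      have "xp (T - 1) = xp T + - X" using xp_succ[of "T-1"] by (simp add: gs)
      moreover have "xp (-1) = - X" using xp_neg[of 1] xp_succ[of 0] by (simp add: xp0)
      ultimately show ?thesis using GX False by (simp add: st a dec_def abs_dwr P_sh xp0 abs_lX gs)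
    qed
  next
    case GY
    then show ?thesis by (simp add: st a dec_def abs_dwr P_ins xp0 cc_def yl_def gs)
  qed
qed

lemma abs_dec_run: "abs_fg (dec (run st w)) = abs_fg (dec st) + abs_fg w"
  unfolding run_def
proof (induction w arbitrary: st)
  case Nil then show ?case by (simp add: abs_nil)
next
  case (Cons a w)
  then show ?case by (simp add: abs_dec_act abs_cons[of a w] add.assoc)
qed

lemma sh_comp[simp]: "sh a \<circ> sh b = sh (b+a)"
  by (rule ext) (auto simp: sh_def add.assoc)
lemma sh0[simp]: "sh 0 = id"
  by (rule ext) (auto simp: sh_def)
lemma ins_sh'[simp]: "ins t e (map (sh k) L) = map (sh k) (ins (t-k) e L)"
  using ins_sh[of k "t-k" e L] by simp

lemma run_cancel: "valid L \<Longrightarrow> run (T,L) [l, linv l] = (T,L)"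
  by (cases l; cases "fst l") (auto simp: run_def linv_def ins_cancel)

lemma run_rel1: "valid L \<Longrightarrow> run (T,L) rel1 = (T,L)"
proof -
  assume v: "valid L"
  have "run (T,L) rel1 = (T, ins 1 True (ins 0 False (ins 2 False (ins 0 True L))))"
    by (simp add: run_def rel1_def)
  also have "ins 2 False (ins 0 True L) = ins 0 True (ins 1 False L)" using ins_comm[OF v, of 0 2] by simp
  also have "ins 0 False (ins 0 True (ins 1 False L)) = ins 1 False L"
    using ins_cancel[OF ins_valid[OF v], of 0 True 1 False] by simp
  also have "ins 1 True (ins 1 False L) = L" using ins_cancel[OF v, of 1 False] by simp
  finally show ?thesis .
qed

lemma run_rel2: "valid L \<Longrightarrow> run (T,L) rel2 = (T,L)"
proof -
  assume v: "valid L"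
  have "run (T,L) rel2 = (T, ins 2 True (ins 0 False (ins 3 False (ins 0 True L))))"
    by (simp add: run_def rel2_def)
  also have "ins 3 False (ins 0 True L) = ins 0 True (ins 2 False L)" using ins_comm[OF v, of 0 3] by simp
  also have "ins 0 False (ins 0 True (ins 2 False L)) = ins 2 False L"
    using ins_cancel[OF ins_valid[OF v], of 0 True 2 False] by simp
  also have "ins 2 True (ins 2 False L) = L" using ins_cancel[OF v, of 2 False] by simp
  finally show ?thesis .
qed

lemma run_app: "run st (u @ v) = run (run st u) v" by (simp add: run_def)

lemma run_eqF: "eqF u v \<Longrightarrow> valid (snd st) \<Longrightarrow> run st u = run st v"
proof (induction arbitrary: st rule: eqF.induct)
  case (eqF_refl u) then show ?case by simp
next
  case (eqF_sym u v) then show ?case by simp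
next
  case (eqF_trans u v w) then show ?case by simp
next
  case (eqF_cong u v p s)
  have "valid (snd (run st p))" using eqF_cong.prems valid_run by blast
  then show ?case using eqF_cong.IH by (simp add: run_app)
next
  case (eqF_cancel l) then show ?case using run_cancel[of "snd st" "fst st" l] by (simp add: run_def)
next
  case eqF_rel1 then show ?case using run_rel1[of "snd st" "fst st"] by (simp add: run_def)
next
  case eqF_rel2 then show ?case using run_rel2[of "snd st" "fst st"] by (simp add: run_def)
qed

definition nfw :: "word \<Rightarrow> word" where "nfw w = dec (run (0,[]) w)"

lemma nfw_eqF: "eqF (nfw w) w"
proof -
  have "abs_fg (dec (0,[])) = 0" by (simp add: dec_def xpow_def abs_nil)
  then have "abs_fg (nfw w) = abs_fg w" by (simp add: nfw_def abs_dec_run)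
  then show ?thesis by (simp add: abs_eq_iff)
qed

lemma nfw_cong: "eqF u v \<Longrightarrow> nfw u = nfw v"
  unfolding nfw_def using run_eqF[of u v "(0,[])"] by simp



declare add_uminus_conv_diff[simp]

lemma subword_snoc: "subword q (u@[b]) \<Longrightarrow> q \<noteq> [] \<Longrightarrow> subword q u \<or> (\<exists>q' p. q = q'@[b] \<and> u = p@q')"
proof -
  assume "subword q (u@[b])" "q \<noteq> []"
  then obtain P S where h: "u@[b] = P@q@S" by (auto simp: subword_def)
  show ?thesis
  proof (cases S rule: rev_cases)
    case Nil
    obtain q' c where q: "q = q'@[c]" using \<open>q \<noteq> []\<close> by (cases q rule: rev_cases) auto
    then show ?thesis using h Nil by auto
  next
    case (snoc S' c)
    then have "u = P@q@S'" using h by auto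
    then show ?thesis by (auto simp: subword_def)
  qed
qed

lemma subword_prefix: "subword q u \<Longrightarrow> subword q (u@v)"
proof -
  assume "subword q u"
  then obtain p s where "u = p@q@s" by (auto simp: subword_def)
  then have "u@v = p@q@(s@v)" by simp
  then show ?thesis unfolding subword_def by blast
qed

lemma NF_prefix: "u@v \<in> NF \<Longrightarrow> u \<in> NF"
  unfolding NF_def mem_Collect_eq using subword_prefix by blast

lemma NF_Nil: "[] \<in> NF"
  by (auto simp: NF_def subword_def)

lemma NF_snocI:
  assumes u: "u \<in> NF" and l: "u \<noteq> [] \<Longrightarrow> last u \<noteq> linv b"
    and p1: "\<And>e i v. i \<ge> 1 \<Longrightarrow> b = ly \<Longrightarrow> u \<noteq> v @ [(GY,e)] @ replicate i lx"
    and p2: "\<And>e i v. i \<ge> 1 \<Longrightarrow> b = lY \<Longrightarrow> u \<noteq> v @ [(GY,e)] @ replicate (i+1) lx"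
  shows "u@[b] \<in> NF"
proof -
  have u1: "\<And>l. \<not> subword [l, linv l] u" using u unfolding NF_def by blast
  have u2: "\<And>e i. i \<ge> 1 \<Longrightarrow> \<not> subword ([(GY, e)] @ replicate i lx @ [ly]) u"
    using u unfolding NF_def by blast
  have u3: "\<And>e i. i \<ge> 1 \<Longrightarrow> \<not> subword ([(GY, e)] @ replicate (i + 1) lx @ [lY]) u"
    using u unfolding NF_def by blast
  have c1: "\<not> subword [l, linv l] (u@[b])" for l
  proof
    assume "subword [l, linv l] (u@[b])"
    from subword_snoc[OF this] u1 obtain q' p where "[l, linv l] = q'@[b]" "u = p@q'" by auto
    then have "q' = [l]" "b = linv l" using append1_eq_conv[of "[l]" "linv l" q' b] by auto
    then show False using l \<open>u = p@q'\<close> by auto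
  qed
  have c2: "\<not> subword ([(GY, e)] @ replicate i lx @ [ly]) (u@[b])" if "i \<ge> 1" for e i
  proof
    assume "subword ([(GY, e)] @ replicate i lx @ [ly]) (u@[b])"
    from subword_snoc[OF this] u2[OF that] obtain q' p where
      "[(GY, e)] @ replicate i lx @ [ly] = q' @ [b]" "u = p @ q'" by auto
    then have "b = ly" "q' = [(GY, e)] @ replicate i lx"
      using append1_eq_conv[of "(GY, e) # replicate i lx" ly q' b] by auto
    then show False using p1[OF that] \<open>u = p @ q'\<close> by auto
  qed
  have c3: "\<not> subword ([(GY, e)] @ replicate (i+1) lx @ [lY]) (u@[b])" if "i \<ge> 1" for e i
  proof
    assume "subword ([(GY, e)] @ replicate (i+1) lx @ [lY]) (u@[b])"
    from subword_snoc[OF this] u3[OF that] obtain q' p where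
      "[(GY, e)] @ replicate (i+1) lx @ [lY] = q' @ [b]" "u = p @ q'" by auto
    then have "b = lY" "q' = [(GY, e)] @ replicate (i+1) lx"
      using append1_eq_conv[of "(GY, e) # replicate (i+1) lx" lY q' b] by auto
    then show False using p2[OF that] \<open>u = p @ q'\<close> by auto
  qed
  show ?thesis using c1 c2 c3 unfolding NF_def mem_Collect_eq by blast
qed

lemma xpow_noGY: "GY \<notin> fst ` set (xpow k)"
  by (auto simp: xpow_def)

lemma NF_noGY: "GY \<notin> fst ` set u \<Longrightarrow> u \<in> NF \<Longrightarrow> u@[(GY,b)] \<in> NF"
proof (rule NF_snocI)
  assume "GY \<notin> fst ` set u"
  then show "u \<noteq> [] \<Longrightarrow> last u \<noteq> linv (GY, b)"
    by (metis fst_conv image_eqI last_in_set linv_def)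
qed (auto)

lemma split_GY: "v1 @ [(GY,a)] @ r1 = v2 @ [(GY,b)] @ r2 \<Longrightarrow> GY \<notin> fst ` set r1 \<Longrightarrow> GY \<notin> fst ` set r2 \<Longrightarrow> a = b \<and> r1 = r2"
proof (induction r1 arbitrary: r2 rule: rev_induct)
  case Nil
  then show ?case
  proof (cases r2 rule: rev_cases)
    case Nil then show ?thesis using Nil.prems by simp
  next
    case (snoc r c) then show ?thesis using Nil.prems by (auto simp: image_iff)
  qed
next
  case (snoc c r1)
  then show ?case
  proof (cases r2 rule: rev_cases)
    case Nil then show ?thesis using snoc.prems by (auto simp: image_iff)
  next
    case (snoc r c')
    then show ?thesis using snoc.prems snoc.IH[of r] by auto
  qed
qed

lemma rep_xpow: "replicate i lx = xpow k \<Longrightarrow> i \<ge> 1 \<Longrightarrow> k = int i"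
proof (cases "k \<ge> 0")
  case True
  assume "replicate i lx = xpow k"
  then have "length (replicate i lx) = length (xpow k)" by simp
  then show ?thesis using True by (simp add: xpow_def)
next
  case False
  assume h: "replicate i lx = xpow k" "i \<ge> 1"
  have "xpow k = replicate (nat (-k)) lX" using False by (simp add: xpow_def)
  then have "replicate i lx = replicate (nat (-k)) lX" using h by simp
  then show ?thesis using h(2) by (cases "nat (-k)"; cases i) auto
qed

lemma rep_noGY: "GY \<notin> fst ` set (replicate i lx)" by auto

lemma snoc_y:
  assumes u: "u \<in> NF" and uv: "u = v @ [(GY,e')] @ xpow k"
    and c1: "k \<noteq> 0 \<or> e' = b" and c2: "b \<longrightarrow> k \<le> 0" and c3: "\<not> b \<longrightarrow> k \<le> 1"
  shows "u @ [(GY,b)] \<in> NF"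
proof (rule NF_snocI[OF u])
  show "u \<noteq> [] \<Longrightarrow> last u \<noteq> linv (GY, b)"
  proof (cases "k = 0")
    case True then show ?thesis using uv c1 by (simp add: xpow_def linv_def)
  next
    case False
    then have "xpow k \<noteq> []" by (simp add: xpow_def)
    then have "last u \<in> set (xpow k)" using uv by simp
    then have "fst (last u) \<noteq> GY" using xpow_noGY[of k] by (metis image_eqI)
    then show ?thesis by (auto simp: linv_def)
  qed
next
  fix e and i :: nat and w assume i: "1 \<le> i" "(GY, b) = ly"
  show "u \<noteq> w @ [(GY, e)] @ replicate i lx"
  proof
    assume "u = w @ [(GY, e)] @ replicate i lx"
    then have "v @ [(GY,e')] @ xpow k = w @ [(GY, e)] @ replicate i lx" using uv by simp
    from split_GY[OF this xpow_noGY rep_noGY] have "replicate i lx = xpow k" by simp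
    then have "k = int i" using rep_xpow i(1) by blast
    then show False using i c2 by simp
  qed
next
  fix e and i :: nat and w assume i: "1 \<le> i" "(GY, b) = lY"
  show "u \<noteq> w @ [(GY, e)] @ replicate (i+1) lx"
  proof
    assume "u = w @ [(GY, e)] @ replicate (i+1) lx"
    then have "v @ [(GY,e')] @ xpow k = w @ [(GY, e)] @ replicate (i+1) lx" using uv by simp
    from split_GY[OF this xpow_noGY rep_noGY] have "replicate (i+1) lx = xpow k" by simp
    then have "k = int (i+1)" using rep_xpow[of "i+1" k] by linarith
    then show False using i c3 by simp
  qed
qed

lemma NF_rep_app: "u \<in> NF \<Longrightarrow> (u \<noteq> [] \<Longrightarrow> fst (last u) = GY) \<Longrightarrow> fst l = GX \<Longrightarrow> u @ replicate n l \<in> NF"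
proof (induction n)
  case 0 then show ?case by simp
next
  case (Suc n)
  have "(u @ replicate n l) @ [l] \<in> NF"
  proof (rule NF_snocI[OF Suc.IH[OF Suc.prems]])
    show "u @ replicate n l \<noteq> [] \<Longrightarrow> last (u @ replicate n l) \<noteq> linv l"
      using Suc.prems by (cases n) (auto simp: linv_def prod_eq_iff)
  qed (use Suc.prems in auto)
  then show ?case by (simp add: replicate_append_same[symmetric])
qed

lemma NF_xpow_app: "u \<in> NF \<Longrightarrow> (u \<noteq> [] \<Longrightarrow> fst (last u) = GY) \<Longrightarrow> u @ xpow k \<in> NF"
  unfolding xpow_def using NF_rep_app[of u lx] NF_rep_app[of u lX] by auto

lemma NF_dwr: "valid L \<Longrightarrow> dwr p L T \<in> NF"
proof (induction L arbitrary: p)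
  case Nil
  show ?case using NF_xpow_app[OF NF_Nil] by simp
next
  case (Cons h L')
  obtain s e where h: "h = (s,e)" by (cases h)
  have IH: "dwr s L' T \<in> NF" using Cons valid_tl by blast
  have "dwr s L' T @ [(GY,e)] \<in> NF"
  proof (cases L')
    case Nil
    then show ?thesis using IH NF_noGY xpow_noGY by simp
  next
    case (Cons h' L'')
    obtain s' e' where h': "h' = (s',e')" by (cases h')
    have "vp (s,e) (s',e')" using Cons.prems h \<open>L' = h'#L''\<close> h' by simp
    then show ?thesis using snoc_y[OF IH, of "dwr s' L'' T" e' "s'-s" e] \<open>L' = h'#L''\<close> h'
      by (auto split: if_splits)
  qed
  then show ?case using NF_xpow_app[of "dwr s L' T @ [(GY,e)]" "s-p"] h by simp
qed

lemma nfw_NF: "nfw w \<in> NF"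
  unfolding nfw_def dec_def using valid_run[of "(0,[])" w] NF_dwr by simp

lemma dwr_sh: "dwr p (map (sh k) L) (T+k) = dwr (p-k) L T"
  by (induction L arbitrary: p) (auto simp: sh_def algebra_simps)

lemma xpow_x: "u @ xpow k @ [lx] \<in> NF \<Longrightarrow> xpow (k+1) = xpow k @ [lx]"
proof (cases "k \<ge> 0")
  case True then show ?thesis by (simp add: xpow_def nat_add_distrib replicate_append_same)
next
  case False
  assume h: "u @ xpow k @ [lx] \<in> NF"
  obtain m where m: "nat (-k) = Suc m" using False by (metis not0_implies_Suc nat_eq_iff2 neq0_conv nat_0_less_mult_iff zero_less_nat_eq neg_0_less_iff_less linorder_not_le mult_1)
  have "xpow k = replicate m lX @ [lX]" using m False by (simp add: xpow_def replicate_append_same)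
  then have "u @ xpow k @ [lx] = (u @ replicate m lX) @ [lX, linv lX] @ []" by (simp add: linv_def)
  then have "subword [lX, linv lX] (u @ xpow k @ [lx])" unfolding subword_def by blast
  then show ?thesis using h by (auto simp: NF_def)
qed

lemma xpow_X: "u @ xpow k @ [lX] \<in> NF \<Longrightarrow> xpow (k - 1) = xpow k @ [lX]"
proof (cases "k \<le> 0")
  case True
  have "nat (-(k-1)) = Suc (nat (-k))" using True by simp
  then show ?thesis using True by (simp add: xpow_def replicate_append_same)
next
  case False
  assume h: "u @ xpow k @ [lX] \<in> NF"
  obtain m where m: "nat k = Suc m" using False by (metis not0_implies_Suc nat_eq_iff2 neq0_conv zero_less_nat_eq linorder_not_le)
  have "xpow k = replicate m lx @ [lx]" using m False by (simp add: xpow_def replicate_append_same)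
  then have "u @ xpow k @ [lX] = (u @ replicate m lx) @ [lx, linv lx] @ []" by (simp add: linv_def)
  then have "subword [lx, linv lx] (u @ xpow k @ [lX])" unfolding subword_def by blast
  then show ?thesis using h by (auto simp: NF_def)
qed



lemma NF_nocancel: "p @ [l, linv l] @ r \<in> NF \<Longrightarrow> False"
  unfolding NF_def subword_def by blast

lemma NF_noly: "i \<ge> 1 \<Longrightarrow> p @ [(GY,e)] @ replicate i lx @ [ly] @ r \<in> NF \<Longrightarrow> False"
proof -
  assume "i \<ge> 1" "p @ [(GY,e)] @ replicate i lx @ [ly] @ r \<in> NF"
  moreover have "subword ([(GY,e)] @ replicate i lx @ [ly]) (p @ [(GY,e)] @ replicate i lx @ [ly] @ r)"
    unfolding subword_def by (rule exI[of _ p], rule exI[of _ r]) simp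
  ultimately show False unfolding NF_def by blast
qed

lemma NF_nolY: "i \<ge> 1 \<Longrightarrow> p @ [(GY,e)] @ replicate (i+1) lx @ [lY] @ r \<in> NF \<Longrightarrow> False"
proof -
  assume "i \<ge> 1" "p @ [(GY,e)] @ replicate (i+1) lx @ [lY] @ r \<in> NF"
  moreover have "subword ([(GY,e)] @ replicate (i+1) lx @ [lY]) (p @ [(GY,e)] @ replicate (i+1) lx @ [lY] @ r)"
    unfolding subword_def by (rule exI[of _ p], rule exI[of _ r]) simp
  ultimately show False unfolding NF_def by blast
qed

lemma ins_head:
  assumes h: "dwr s L' T @ [(GY,e)] @ xpow s @ [(GY,b)] \<in> NF"
  shows "ins 0 b ((s,e)#L') = (0,b)#(s,e)#L'"
proof (cases b)
  case True
  have "\<not> s > 0"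
  proof
    assume "s > 0"
    then have "xpow s = replicate (nat s) lx" by (simp add: xpow_def)
    moreover have "nat s \<ge> 1" using \<open>s > 0\<close> by simp
    ultimately show False using h True NF_noly[of "nat s" "dwr s L' T" e "[]"] by simp
  qed
  moreover have "\<not> (s = 0 \<and> \<not> e)"
  proof
    assume "s = 0 \<and> \<not> e"
    then show False using h True NF_nocancel[of "dwr s L' T" lY "[]"] by (simp add: xpow_def linv_def)
  qed
  ultimately show ?thesis using True by auto
next
  case False
  have "\<not> s \<ge> 2"
  proof
    assume "s \<ge> 2"
    then have "xpow s = replicate ((nat s - 1) + 1) lx" by (simp add: xpow_def)
    moreover have "nat s - 1 \<ge> 1" using \<open>s \<ge> 2\<close> by simp
    ultimately show False using h False NF_nolY[of "nat s - 1" "dwr s L' T" e "[]"] by simp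
  qed
  moreover have "\<not> (s = 0 \<and> e)"
  proof
    assume "s = 0 \<and> e"
    then show False using h False NF_nocancel[of "dwr s L' T" ly "[]"] by (simp add: xpow_def linv_def)
  qed
  ultimately show ?thesis using False by auto
qed

lemma dec_step: "valid L \<Longrightarrow> dwr 0 L T @ [a] \<in> NF \<Longrightarrow> dec (act (T,L) a) = dwr 0 L T @ [a]"
proof -
  assume v: "valid L" and h: "dwr 0 L T @ [a] \<in> NF"
  obtain g b where a: "a = (g,b)" by (cases a)
  show ?thesis
  proof (cases g)
    case GX
    show ?thesis
    proof (cases b)
      case True
      have d: "dec (act (T,L) a) = dwr (-1) L T"
        using dwr_sh[of 0 1 L T] by (simp add: a GX True dec_def)
      show ?thesis
      proof (cases L)
        case Nil then show ?thesis using d h xpow_x[of "[]" T] a GX True by simp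
      next
        case (Cons h' L')
        obtain s e where h': "h' = (s,e)" by (cases h')
        show ?thesis using d h xpow_x[of "dwr s L' T @ [(GY,e)]" s] a GX True Cons h' by simp
      qed
    next
      case False
      have d: "dec (act (T,L) a) = dwr 1 L T"
        using dwr_sh[of 0 "-1" L T] by (simp add: a GX False dec_def)
      show ?thesis
      proof (cases L)
        case Nil then show ?thesis using d h xpow_X[of "[]" T] a GX False by simp
      next
        case (Cons h' L')
        obtain s e where h': "h' = (s,e)" by (cases h')
        show ?thesis using d h xpow_X[of "dwr s L' T @ [(GY,e)]" s] a GX False Cons h' by simp
      qed
    qed
  next
    case GY
    show ?thesis
    proof (cases L)
      case Nil then show ?thesis using a GY by (simp add: dec_def xpow_def)
    next
      case (Cons h' L')
      obtain s e where h': "h' = (s,e)" by (cases h')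
      have "ins 0 b L = (0,b)#L" using ins_head[of s L' T e b] h a GY Cons h' by simp
      then show ?thesis using a GY by (simp add: dec_def xpow_def)
    qed
  qed
qed

lemma nfw_id: "w \<in> NF \<Longrightarrow> nfw w = w"
proof (induction w rule: rev_induct)
  case Nil then show ?case by (simp add: nfw_def run_def dec_def xpow_def)
next
  case (snoc a w)
  have wNF: "w \<in> NF" using snoc.prems NF_prefix by blast
  obtain T L where st: "run (0,[]) w = (T,L)" by (cases "run (0,[]) w")
  have v: "valid L" using valid_run[of "(0,[])" w] st by simp
  have dw: "dwr 0 L T = w" using snoc.IH[OF wNF] st by (simp add: nfw_def dec_def)
  have "run (0,[]) (w@[a]) = act (T,L) a" using st by (simp add: run_def)
  then show ?case using dec_step[OF v, of T a] dw snoc.prems by (simp add: nfw_def)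
qed

lemma NF_uniq: "u \<in> NF \<Longrightarrow> v \<in> NF \<Longrightarrow> eqF u v \<Longrightarrow> u = v"
  using nfw_id nfw_cong by metis

lemma nfword_last: "n \<ge> 1 \<Longrightarrow> \<exists>v. nfword n eps i = v @ [(GY, eps 1)] @ xpow (i 0)"
proof (induction n)
  case 0 then show ?case by simp
next
  case (Suc n)
  show ?case
  proof (cases "n = 0")
    case True then show ?thesis by simp
  next
    case False
    then obtain v where "nfword n eps i = v @ [(GY, eps 1)] @ xpow (i 0)" using Suc.IH by auto
    then show ?thesis by simp
  qed
qed

lemma onT_intro: "\<nu> \<in> NF \<Longrightarrow> eqF \<nu> \<gamma> \<Longrightarrow> (\<nu>@[a] \<in> NF \<or> (\<exists>w. \<nu> = w@[linv a])) \<Longrightarrow> onT \<gamma> a"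
proof -
  assume n: "\<nu> \<in> NF" and e: "eqF \<nu> \<gamma>" and d: "\<nu>@[a] \<in> NF \<or> (\<exists>w. \<nu> = w@[linv a])"
  show ?thesis
  proof (cases "\<nu>@[a] \<in> NF")
    case True then show ?thesis unfolding onT_def using e by blast
  next
    case False
    then obtain w where w: "\<nu> = w@[linv a]" using d by blast
    have c: "eqF [linv a, a] []" using eqF_cancel[of "linv a"] by simp
    have "eqF (w @ [linv a, a] @ []) (w @ [] @ [])" by (rule eqF_cong[OF c])
    then have "eqF w (\<nu> @ [a])" using w by (simp add: eqF_sym)
    moreover have "eqF (\<nu> @ [a]) (\<gamma> @ [a])" using eqF_app[OF e eqF_refl] by simp
    ultimately have "eqF w (\<gamma> @ [a])" by (rule eqF_trans)
    then show ?thesis unfolding onT_def using n w by (metis linv_linv)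
  qed
qed

lemma snoc_x: "\<nu> \<in> NF \<Longrightarrow> fst a = GX \<Longrightarrow> \<nu>@[a] \<in> NF \<or> (\<exists>w. \<nu> = w@[linv a])"
proof (cases "\<nu> \<noteq> [] \<and> last \<nu> = linv a")
  case True then show ?thesis by (metis append_butlast_last_id)
next
  case False
  assume "\<nu> \<in> NF" "fst a = GX"
  then have "\<nu>@[a] \<in> NF" using False by (intro NF_snocI) auto
  then show ?thesis by blast
qed

theorem lemma2p3:
  shows "(\<forall>(n::nat) (eps::nat \<Rightarrow> bool) (i::nat \<Rightarrow> int) (a::letter).
            nfword n eps i \<in> NF \<longrightarrow>
            (\<not> onT (nfword n eps i) a \<longleftrightarrow>
               (a = ly \<and> n \<ge> 1 \<and> i 0 \<ge> 1) \<or> (a = lY \<and> n \<ge> 1 \<and> i 0 \<ge> 2)))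
       \<and> (\<forall>(\<gamma>::word) (a::letter). fst a = GX \<longrightarrow> onT \<gamma> a)"
proof (intro conjI allI impI)
  fix \<gamma> :: word and a :: letter
  assume "fst a = GX"
  then show "onT \<gamma> a" using onT_intro[OF nfw_NF nfw_eqF] snoc_x[OF nfw_NF] by blast
next
  fix n eps i a
  assume gNF: "nfword n eps i \<in> NF"
  define \<gamma> where "\<gamma> = nfword n eps i"
  have gNF': "\<gamma> \<in> NF" using gNF \<gamma>_def by simp
  show "\<not> onT (nfword n eps i) a \<longleftrightarrow>
        (a = ly \<and> n \<ge> 1 \<and> i 0 \<ge> 1) \<or> (a = lY \<and> n \<ge> 1 \<and> i 0 \<ge> 2)" (is "_ \<longleftrightarrow> ?C")
  proof
    assume C: ?C
    then have n1: "n \<ge> 1" and i1: "i 0 \<ge> 1" by auto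
    obtain v where gv: "\<gamma> = v @ [(GY, eps 1)] @ xpow (i 0)" using nfword_last[OF n1] \<gamma>_def by auto
    obtain m where m: "nat (i 0) = Suc m" using i1 by (metis Suc_pred' zero_less_nat_eq zero_less_one order_less_le_trans)
    have xr: "xpow (i 0) = replicate (Suc m) lx" using i1 m by (simp add: xpow_def)
    have lastg: "last \<gamma> = lx" using gv xr by simp
    show "\<not> onT (nfword n eps i) a"
    proof
      assume "onT (nfword n eps i) a"
      then obtain w b where wb: "w @ [b] \<in> NF"
        "(eqF w \<gamma> \<and> b = a) \<or> (eqF w (\<gamma> @ [a]) \<and> b = linv a)" unfolding onT_def \<gamma>_def by blast
      show False
      proof (cases "eqF w \<gamma> \<and> b = a")
        case True
        then have "w = \<gamma>" using NF_uniq[OF NF_prefix[OF wb(1)] gNF'] by blast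
        then have g: "v @ [(GY, eps 1)] @ replicate (Suc m) lx @ [a] @ [] \<in> NF"
          using wb(1) True gv xr by simp
        show False
        proof (cases "a = ly")
          case True then show False using g NF_noly[of "Suc m" v "eps 1" "[]"] by simp
        next
          case False
          then have "a = lY" "i 0 \<ge> 2" using C by auto
          then have "m \<ge> 1" using m by linarith
          then show False using g NF_nolY[of m v "eps 1" "[]"] \<open>a = lY\<close> by simp
        qed
      next
        case False
        then have e: "eqF w (\<gamma> @ [a])" and b: "b = linv a" using wb(2) by auto
        have "eqF (w @ [linv a]) (\<gamma> @ [a] @ [linv a])" using eqF_app[OF e eqF_refl] by simp
        moreover have "eqF (\<gamma> @ [a, linv a] @ []) (\<gamma> @ [] @ [])" by (rule eqF_cong[OF eqF_cancel])
        ultimately have "eqF (w @ [linv a]) \<gamma>" using eqF_trans by simp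
        then have "w @ [linv a] = \<gamma>" using NF_uniq wb(1) b gNF' by blast
        then have "linv a = lx" using lastg by (metis last_snoc)
        then show False using C by (auto simp: linv_def)
      qed
    qed
  next
    assume nC: "\<not> onT (nfword n eps i) a"
    show ?C
    proof (rule ccontr)
      assume nC2: "\<not> ?C"
      have "\<gamma>@[a] \<in> NF \<or> (\<exists>w. \<gamma> = w@[linv a])"
      proof (cases "fst a = GX")
        case True then show ?thesis using snoc_x[OF gNF'] by blast
      next
        case False
        then obtain b where a: "a = (GY,b)" by (cases a; cases "fst a") auto
        show ?thesis
        proof (cases "n = 0")
          case True
          then have "\<gamma> = xpow (i 0)" using \<gamma>_def by simp
          then show ?thesis using NF_noGY[OF _ gNF'] xpow_noGY a by simp
        next
          case False
          then have n1: "n \<ge> 1" by simp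
          obtain v where gv: "\<gamma> = v @ [(GY, eps 1)] @ xpow (i 0)" using nfword_last[OF n1] \<gamma>_def by auto
          have c2: "b \<longrightarrow> i 0 \<le> 0" and c3: "\<not> b \<longrightarrow> i 0 \<le> 1" using nC2 n1 a by auto
          show ?thesis
          proof (cases "i 0 = 0 \<and> eps 1 \<noteq> b")
            case True
            then have "\<gamma> = v @ [linv a]" using gv a by (simp add: xpow_def linv_def)
            then show ?thesis by blast
          next
            case False
            then have c1: "i 0 \<noteq> 0 \<or> eps 1 = b" by blast
            show ?thesis using snoc_y[OF gNF' gv c1 c2 c3] a by simp
          qed
        qed
      qed
      then have "onT \<gamma> a" using onT_intro[OF gNF' eqF_refl] by blast
      then show False using nC \<gamma>_def by simp
    qed
  qed
qed

end
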